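(* Assume (as is known) that $K_0(\mathcal{A}(\mathbb{C}P^2_q))\cong\mathbb{Z}^3\cong K^0(\mathcal{A}(\mathbb{C}P^2_q))$ and that the index pairing between even Fredholm modules and projections depends only on their classes. Then the classes $e_1=[1]$, $e_2=[P_{-1}]$ (the class of the left module $\Sigma_{0,1}\cong\mathcal{A}(\mathbb{C}P^2_q)^{3}P_{-1}$, equivalently of the right module $\Sigma_{0,-1}$) and $e_3=[P_1]$ (the class of the left module $\Sigma_{0,-1}$, equivalently of the right module $\Sigma_{0,1}$) form a $\mathbb{Z}$-basis of $K_0(\mathcal{A}(\mathbb{C}P^2_q))$, and the classes of the three even Fredholm modules $\varphi_1,\varphi_2,\varphi_3$ described below form a $\mathbb{Z}$-basis of $K^0(\mathcal{A}(\mathbb{C}P^2_q))$.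
   Context: Fix $0<q<1$. $\mathcal{A}(S^5_q)$ is the unital $*$-algebra generated by $z_1,z_2,z_3$ and adjoints with relations $z_iz_j=qz_jz_i$ ($i<j$), $z_i^*z_j=qz_jz_i^*$ ($i\ne j$), $[z_1^*,z_1]=0$, $[z_2^*,z_2]=(1-q^2)z_1z_1^*$, $[z_3^*,z_3]=(1-q^2)(z_1z_1^*+z_2z_2^* )$, $\sum_iz_iz_i^*=1$; it is $\mathbb{Z}$-graded by $\deg z_i=1,\deg z_i^*=-1$, $\Sigma_{0,N}$ is the degree-$N$ part and $\mathcal{A}(\mathbb{C}P^2_q)=\Sigma_{0,0}$ (generated by $p_{ij}=z_i^*z_j$). $P_{\pm1}=\Psi_{\pm1}\Psi_{\pm1}^\dagger$ are $3\times3$ projections where $\Psi_1=(z_1^*,z_2^*,z_3^* )^t$ (entries $\psi^1_{j,k,l}$ with $(\psi^1_{j,k,l})^*=z_1^jz_2^kz_3^l$, $j+k+l=1$) and $\Psi_{-1}$ has entries $\psi^{-1}_{j,k,l}$ with $(\psi^{-1}_{j,k,l})^*=q^{1+j-l}(z_1^jz_2^kz_3^l)^*$, $j+k+l=1$. The Fredholm modules: $\varphi_1$ has $\mathcal{H}=\mathbb{C}\oplus\mathbb{C}$, representation $a\mapsto\mathrm{diag}(\chi_0(a),0)$, $F=\begin{pmatrix}0&1\\1&0\end{pmatrix}$, grading $\mathrm{diag}(1,-1)$, where $\chi_0$ is the character $\chi_0(p_{ij})=\delta_{i3}\delta_{j3}$. $\varphi_2$ has $\mathcal{H}=\ell^2(\mathbb{N})\oplus\ell^2(\mathbb{N})$,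 representation $\mathrm{diag}(\chi_1(a),\chi_0(a)\mathrm{id})$, same $F$ and grading, where $\chi_1$ is the restriction of the representation of $\mathcal{A}(S^5_q)$ on $\ell^2(\mathbb{N})$ with $z_1\mapsto0$, $z_2|n\rangle=q^n|n\rangle$, $z_3|n\rangle=\sqrt{1-q^{2(n+1)}}|n+1\rangle$. $\varphi_3$ has $\mathcal{H}=\mathcal{H}'\oplus\mathcal{H}'$, representation $\pi_+\oplus\pi_-$, same $F$ and grading, where $\mathcal{H}'$ has orthonormal basis $|\ell,m\rangle$ ($\ell\in\frac12\mathbb{N}$, $\ell+m\in\mathbb{N}$); $\pi_-(z_1)=0$, $\pi_-(z_2)|\ell,m\rangle=q^{\ell+m}|\ell,m\rangle$, $\pi_-(z_3)|\ell,m\rangle=\sqrt{1-q^{2(\ell+m+1)}}|\ell,m+1\rangle$; $\pi_+(a)|\ell,m\rangle=\chi_2(a)|\ell,m\rangle$ for $m\le\ell$ and $=\chi_0(a)|\ell,m\rangle$ for $m>\ell$, with $\chi_2(z_1)|\ell,m\rangle=q^{2\ell}|\ell,m\rangle$, $\chi_2(z_2)|\ell,m\rangle=q^{\ell+m}\sqrt{1-q^{2(\ell-m+1)}}|\ell+\frac12,m-\frac12\rangle$, $\chi_2(z_3)|\ell,m\rangle=\sqrt{1-q^{2(\ell+m+1)}}|\ell+\frac12,m+\frac12\rangle$. The pairing of a class $[(\pi,\mathcal{H},F)]$ with a projection $e\in M_m(\mathcal{A})$ is $\frac12\mathrm{Tr}(\gamma F[F,e])$, which here equals $\mathrm{Tr}(\pi^+(e)-\pi^-(e))$.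 *)

theory Defs
  imports "HOL-Analysis.Analysis" "HOL-Library.Product_Plus"
begin

definition zmul :: "int \<Rightarrow> 'a::ab_group_add \<Rightarrow> 'a" where
  "zmul n x = (if 0 \<le> n then (((+) x) ^^ nat n) 0 else - ((((+) x) ^^ nat (- n)) 0))"

definition Zbasis3 :: "'a::ab_group_add \<Rightarrow> 'a \<Rightarrow> 'a \<Rightarrow> bool" where
  "Zbasis3 a b c = bij (\<lambda>(m::int, n::int, k::int). zmul m a + zmul n b + zmul k c)"

definition iso_Z3 :: "'a::ab_group_add itself \<Rightarrow> bool" where
  "iso_Z3 _ = (\<exists>h :: 'a \<Rightarrow> int \<times> int \<times> int. bij h \<and> (\<forall>x y. h (x + y) = h x + h y))"

section \<open>Operators on a Hilbert space with orthonormal basis indexed by 'b,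
  represented by their matrix coefficients  M i j = <e_i, T e_j>\<close>

type_synonym 'b opm = "'b \<Rightarrow> 'b \<Rightarrow> complex"

definition mmul :: "'b opm \<Rightarrow> 'b opm \<Rightarrow> 'b opm" where
  "mmul A B i j = (\<Sum>\<^sub>\<infinity>k. A i k * B k j)"

definition madj :: "'b opm \<Rightarrow> 'b opm" where
  "madj A i j = cnj (A j i)"

definition idm :: "'b opm" where
  "idm i j = (if i = j then 1 else 0)"

section \<open>Elements of A(CP^2_q) of the form c0*1 + sum c_ij p_ij  (p_ij = z_i^* z_j)\<close>

type_synonym elem = "complex \<times> (nat \<Rightarrow> nat \<Rightarrow> complex)"

definition pe :: "nat \<Rightarrow> nat \<Rightarrow> elem" where
  "pe a b = (0, \<lambda>i j. if i = a \<and> j = b then 1 else 0)"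

definition one_e :: elem where
  "one_e = (1, \<lambda>i j. 0)"

definition eadd :: "elem \<Rightarrow> elem \<Rightarrow> elem" where
  "eadd x y = (fst x + fst y, \<lambda>i j. snd x i j + snd y i j)"

definition escale :: "complex \<Rightarrow> elem \<Rightarrow> elem" where
  "escale s x = (s * fst x, \<lambda>i j. s * snd x i j)"

text \<open>z_a z_b^* rewritten in terms of the p_ij using the defining relations of A(S^5_q):
  for a \<noteq> b, z_a z_b^* = q^{-1} p_ba;  z_1 z_1^* = p_11;
  z_2 z_2^* = p_22 - (1-q^2) p_11;  z_3 z_3^* = p_33 - (1-q^2)(p_11 + p_22 - (1-q^2) p_11).\<close>
definition zzs :: "real \<Rightarrow> nat \<Rightarrow> nat \<Rightarrow> elem" where
  "zzs q a b =
    (if a \<noteq> b then escale (complex_of_real (1 / q)) (pe b a)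
     else if a = 1 then pe 1 1
     else if a = 2 then eadd (pe 2 2) (escale (complex_of_real (-(1 - q^2))) (pe 1 1))
     else eadd (pe 3 3) (escale (complex_of_real (-(1 - q^2)))
             (eadd (pe 1 1) (eadd (pe 2 2) (escale (complex_of_real (-(1 - q^2))) (pe 1 1))))))"

text \<open>Projections as (size, matrix of entries), indices 1..size.\<close>
type_synonym projm = "nat \<times> (nat \<Rightarrow> nat \<Rightarrow> elem)"

text \<open>P_1 = Psi_1 Psi_1^dagger with Psi_1 = (z_1^*, z_2^*, z_3^*)^t: entries z_a^* z_b = p_ab.\<close>
definition P_plus1 :: projm where
  "P_plus1 = (3, \<lambda>a b. pe a b)"

text \<open>Psi_{-1} has entries psi_a = c_a z_a, c = (q^2, q, 1); P_{-1} entries c_a c_b z_a z_b^*.\<close>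
definition cm1 :: "real \<Rightarrow> nat \<Rightarrow> real" where
  "cm1 q a = (if a = 1 then q^2 else if a = 2 then q else 1)"

definition P_minus1 :: "real \<Rightarrow> projm" where
  "P_minus1 q = (3, \<lambda>a b. escale (complex_of_real (cm1 q a * cm1 q b)) (zzs q a b))"

definition P_one :: projm where
  "P_one = (1, \<lambda>a b. one_e)"

text \<open>The three projections 1, P_{-1}, P_1 (giving e_1, e_2, e_3).\<close>
definition proj :: "real \<Rightarrow> nat \<Rightarrow> projm" where
  "proj q j = (if j = 1 then P_one else if j = 2 then P_minus1 q else P_plus1)"

text \<open>A representation is given by the image of 1 and of the generators p_ij.\<close>
type_synonym 'b repn = "'b opm \<times> (nat \<Rightarrow> nat \<Rightarrow> 'b opm)"

definition evalr :: "'b repn \<Rightarrow> elem \<Rightarrow> 'b opm" where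
  "evalr r x i j = fst x * fst r i j + (\<Sum>a\<in>{1,2,3}. \<Sum>b\<in>{1,2,3}. snd x a b * snd r a b i j)"

text \<open>Restriction to A(CP^2_q) of a representation of A(S^5_q) given by images Z of z_1,z_2,z_3:
  p_ab = z_a^* z_b.\<close>
definition s5rep :: "'b opm \<Rightarrow> (nat \<Rightarrow> 'b opm) \<Rightarrow> 'b repn" where
  "s5rep U Z = (U, \<lambda>a b. mmul (madj (Z a)) (Z b))"

definition chi0rep :: "'b opm \<Rightarrow> 'b repn" where
  "chi0rep E = (E, \<lambda>a b. if a = 3 \<and> b = 3 then E else (\<lambda>i j. 0))"

definition zero_rep :: "'b repn" where
  "zero_rep = ((\<lambda>i j. 0), \<lambda>a b i j. 0)"

text \<open>Pairing Tr(pi^+(e) - pi^-(e)) for a projection e in M_n(A), trace over H \<otimes> C^n.\<close>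
definition index_pairing :: "'b repn \<Rightarrow> 'b repn \<Rightarrow> projm \<Rightarrow> complex" where
  "index_pairing rp rm e =
     (\<Sum>\<^sub>\<infinity>(a, i) \<in> {1..fst e} \<times> UNIV.
        evalr rp (snd e a a) i i - evalr rm (snd e a a) i i)"

subsection \<open>phi_1: H = C + C, pi^+ = chi_0, pi^- = 0\<close>

definition phi1_plus :: "unit repn" where "phi1_plus = chi0rep idm"
definition phi1_minus :: "unit repn" where "phi1_minus = zero_rep"

subsection \<open>phi_2: H = l2(N) + l2(N), pi^+ = chi_1, pi^- = chi_0 id\<close>

definition chi1Z :: "real \<Rightarrow> nat \<Rightarrow> nat opm" where
  "chi1Z q a i j =
    (if a = 2 then (if i = j then complex_of_real (q ^ j) else 0)
     else if a = 3 then (if i = Suc j then complex_of_real (sqrt (1 - q ^ (2 * (j + 1)))) else 0)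
     else 0)"

definition phi2_plus :: "real \<Rightarrow> nat repn" where "phi2_plus q = s5rep idm (chi1Z q)"
definition phi2_minus :: "nat repn" where "phi2_minus = chi0rep idm"

subsection \<open>phi_3: H = H' + H'.  The basis vector |l,m> of H' (l \<in> N/2, l+m \<in> N) is
  encoded as the pair (2l, l+m) :: nat \<times> nat; thus m \<le> l iff  snd \<le> fst.\<close>

definition piminusZ :: "real \<Rightarrow> nat \<Rightarrow> (nat \<times> nat) opm" where
  "piminusZ q a i j =
    (if a = 2 then (if i = j then complex_of_real (q ^ snd j) else 0)
     else if a = 3 then (if i = (fst j, Suc (snd j))
                         then complex_of_real (sqrt (1 - q ^ (2 * (snd j + 1)))) else 0)
     else 0)"

text \<open>chi_2 acting on the invariant subspace spanned by |l,m> with m \<le> l (zero on the complement).\<close>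
definition chi2Z :: "real \<Rightarrow> nat \<Rightarrow> (nat \<times> nat) opm" where
  "chi2Z q a i j =
    (if snd j \<le> fst j then
       (if a = 1 then (if i = j then complex_of_real (q ^ fst j) else 0)
        else if a = 2 then (if i = (Suc (fst j), snd j)
              then complex_of_real (q ^ snd j * sqrt (1 - q ^ (2 * (fst j - snd j + 1)))) else 0)
        else if a = 3 then (if i = (Suc (fst j), Suc (snd j))
              then complex_of_real (sqrt (1 - q ^ (2 * (snd j + 1)))) else 0)
        else 0)
     else 0)"

definition Qhigh :: "(nat \<times> nat) opm" where
  "Qhigh i j = (if i = j \<and> fst j < snd j then 1 else 0)"

text \<open>pi^+ = chi_2 on {m \<le> l}, chi_0 on {m > l}.\<close>
definition phi3_plus :: "real \<Rightarrow> (nat \<times> nat) repn" where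
  "phi3_plus q = (idm, \<lambda>a b i j. snd (s5rep idm (chi2Z q)) a b i j + snd (chi0rep Qhigh) a b i j)"

definition phi3_minus :: "real \<Rightarrow> (nat \<times> nat) repn" where
  "phi3_minus q = s5rep idm (piminusZ q)"

end

theory Submission
  imports Defs
begin


lemma mmul_diag1:
  assumes "\<And>k. k \<noteq> k0 \<Longrightarrow> Z k i = 0"
  shows "mmul (madj Z) Z i i = cnj (Z k0 i) * Z k0 i"
  unfolding mmul_def madj_def
  by (rule infsumI, rule has_sum_finite_neutralI[of "{k0}"]) (auto simp: assms)

lemma mmul_diag0:
  assumes "\<And>k. Z k i = 0"
  shows "mmul (madj Z) Z i i = 0"
  unfolding mmul_def madj_def by (simp add: assms)

lemma cnj_of_real_sq: "cnj (complex_of_real x) * complex_of_real x = complex_of_real (x * x)"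
  by simp

lemma sqrt_sq_pow:
  assumes "0 < q" "q < 1"
  shows "sqrt (1 - q ^ n) * sqrt (1 - q ^ n) = 1 - q ^ n"
proof -
  have "q ^ n \<le> 1" using assms by (simp add: power_le_one)
  then show ?thesis by simp
qed

lemma phi2p:
  assumes "0 < q" "q < 1"
  shows "snd (phi2_plus q) a a i i =
    (if a = 2 then complex_of_real ((q^2)^i) else if a = 3 then complex_of_real (1 - (q^2)^(Suc i)) else 0)"
proof -
  have "a = 2 \<or> a = 3 \<or> (a \<noteq> 2 \<and> a \<noteq> 3)" by auto
  then show ?thesis
  proof (elim disjE)
    assume a: "a = 2"
    show ?thesis unfolding phi2_plus_def s5rep_def
      apply (simp add: a)
      apply (subst mmul_diag1[of i])
       apply (simp add: chi1Z_def)
      apply (simp add: chi1Z_def power_mult[symmetric] power2_eq_square[symmetric] del: of_real_power)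
      by (simp add: power_mult mult.commute)
  next
    assume a: "a = 3"
    have val: "chi1Z q 3 (Suc i) i = complex_of_real (sqrt (1 - q ^ (2 * (i + 1))))"
      by (simp add: chi1Z_def)
    have h: "sqrt (1 - q ^ (2 * (i + 1))) * sqrt (1 - q ^ (2 * (i + 1))) = 1 - (q^2)^Suc i"
      by (subst sqrt_sq_pow[OF assms]) (simp add: power_mult power2_eq_square)
    show ?thesis unfolding phi2_plus_def s5rep_def
      apply (simp add: a)
      apply (subst mmul_diag1[of "Suc i"])
       apply (simp add: chi1Z_def)
      apply (simp only: val cnj_of_real_sq h)
      by simp
  qed (simp add: phi2_plus_def s5rep_def, rule mmul_diag0, simp add: chi1Z_def)
qed

lemma phi2m: "snd phi2_minus a a i i = (if a = 3 then 1 else 0)"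
  by (simp add: phi2_minus_def chi0rep_def idm_def)

lemma phi3m:
  assumes "0 < q" "q < 1"
  shows "snd (phi3_minus q) a a (L,M) (L,M) =
    (if a = 2 then complex_of_real ((q^2)^M) else if a = 3 then complex_of_real (1 - (q^2)^(Suc M)) else 0)"
proof -
  have "a = 2 \<or> a = 3 \<or> (a \<noteq> 2 \<and> a \<noteq> 3)" by auto
  then show ?thesis
  proof (elim disjE)
    assume a: "a = 2"
    show ?thesis unfolding phi3_minus_def s5rep_def
      apply (simp add: a)
      apply (subst mmul_diag1[of "(L,M)"])
       apply (simp add: piminusZ_def)
      apply (simp add: piminusZ_def power_mult[symmetric] power2_eq_square[symmetric] del: of_real_power)
      by (simp add: power_mult mult.commute)
  next
    assume a: "a = 3"
    have val: "piminusZ q 3 (L, Suc M) (L,M) = complex_of_real (sqrt (1 - q ^ (2 * (M + 1))))"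
      by (simp add: piminusZ_def)
    have h: "sqrt (1 - q ^ (2 * (M + 1))) * sqrt (1 - q ^ (2 * (M + 1))) = 1 - (q^2)^Suc M"
      by (subst sqrt_sq_pow[OF assms]) (simp add: power_mult power2_eq_square)
    show ?thesis unfolding phi3_minus_def s5rep_def
      apply (simp add: a)
      apply (subst mmul_diag1[of "(L, Suc M)"])
       apply (auto simp add: piminusZ_def)[1]
      apply (simp only: val cnj_of_real_sq h)
      by simp
  qed (simp add: phi3_minus_def s5rep_def, rule mmul_diag0, simp add: piminusZ_def)
qed

lemma phi3p:
  assumes "0 < q" "q < 1"
  shows "snd (phi3_plus q) a a (L,M) (L,M) =
    (if a = 1 then (if M \<le> L then complex_of_real ((q^2)^L) else 0)
     else if a = 2 then (if M \<le> L then complex_of_real ((q^2)^M - (q^2)^(Suc L)) else 0)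
     else if a = 3 then (if M \<le> L then complex_of_real (1 - (q^2)^(Suc M)) else 1)
     else 0)"
proof (cases "M \<le> L")
  case False
  have z: "mmul (madj (chi2Z q a)) (chi2Z q a) (L,M) (L,M) = 0"
    by (rule mmul_diag0) (simp add: chi2Z_def False)
  show ?thesis
    unfolding phi3_plus_def s5rep_def chi0rep_def
    using False by (simp add: z Qhigh_def)
next
  case True
  have q3: "snd (chi0rep Qhigh) a a (L,M) (L,M) = 0"
    using True by (simp add: chi0rep_def Qhigh_def)
  have "a = 1 \<or> a = 2 \<or> a = 3 \<or> (a \<noteq> 1 \<and> a \<noteq> 2 \<and> a \<noteq> 3)" by auto
  then show ?thesis
  proof (elim disjE)
    assume a: "a = 1"
    have val: "chi2Z q 1 (L,M) (L,M) = complex_of_real (q ^ L)"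
      using True by (simp add: chi2Z_def)
    have "mmul (madj (chi2Z q 1)) (chi2Z q 1) (L,M) (L,M) = complex_of_real ((q^2)^L)"
      apply (subst mmul_diag1[of "(L,M)"])
       apply (auto simp add: chi2Z_def)[1]
      apply (simp only: val cnj_of_real_sq)
      by (simp add: power_mult_distrib power2_eq_square power_mult[symmetric])
    then show ?thesis unfolding phi3_plus_def using q3 True a by (simp add: s5rep_def)
  next
    assume a: "a = 2"
    have val: "chi2Z q 2 (Suc L,M) (L,M) = complex_of_real (q ^ M * sqrt (1 - q ^ (2 * (L - M + 1))))"
      using True by (simp add: chi2Z_def)
    have h: "(q ^ M * sqrt (1 - q ^ (2 * (L - M + 1)))) * (q ^ M * sqrt (1 - q ^ (2 * (L - M + 1))))
       = (q^2)^M - (q^2)^(Suc L)"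
    proof -
      have "(q ^ M * sqrt (1 - q ^ (2 * (L - M + 1)))) * (q ^ M * sqrt (1 - q ^ (2 * (L - M + 1))))
          = (q^M * q^M) * (1 - q ^ (2 * (L - M + 1)))"
        using sqrt_sq_pow[OF assms, of "2 * (L - M + 1)"] by (simp add: algebra_simps)
      also have "\<dots> = (q^2)^M - (q^2)^M * (q^2) ^ (L - M + 1)"
      proof -
        have e1: "q^(2*(L-M+1)) = (q^2)^(L-M+1)" by (rule power_mult)
        have e2: "q^M*q^M = (q^2)^M" by (simp add: power2_eq_square power_mult_distrib)
        show ?thesis by (simp only: e1 e2 right_diff_distrib mult_1_right)
      qed
      also have "(q^2)^M * (q^2) ^ (L - M + 1) = (q^2)^(Suc L)"
        using True by (simp add: power_add[symmetric])
      finally show ?thesis .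
    qed
    have "mmul (madj (chi2Z q 2)) (chi2Z q 2) (L,M) (L,M) = complex_of_real ((q^2)^M - (q^2)^(Suc L))"
      apply (subst mmul_diag1[of "(Suc L,M)"])
       apply (auto simp add: chi2Z_def)[1]
      apply (simp only: val cnj_of_real_sq h)
      done
    then show ?thesis unfolding phi3_plus_def using q3 True a by (simp add: s5rep_def)
  next
    assume a: "a = 3"
    have val: "chi2Z q 3 (Suc L, Suc M) (L,M) = complex_of_real (sqrt (1 - q ^ (2 * (M + 1))))"
      using True by (simp add: chi2Z_def)
    have h: "sqrt (1 - q ^ (2 * (M + 1))) * sqrt (1 - q ^ (2 * (M + 1))) = 1 - (q^2)^Suc M"
      by (subst sqrt_sq_pow[OF assms]) (simp add: power_mult power2_eq_square)
    have "mmul (madj (chi2Z q 3)) (chi2Z q 3) (L,M) (L,M) = complex_of_real (1 - (q^2)^Suc M)"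
      apply (subst mmul_diag1[of "(Suc L, Suc M)"])
       apply (auto simp add: chi2Z_def)[1]
      apply (simp only: val cnj_of_real_sq h)
      done
    then show ?thesis unfolding phi3_plus_def using q3 True a by (simp add: s5rep_def del: of_real_diff)
  next
    assume a: "a \<noteq> 1 \<and> a \<noteq> 2 \<and> a \<noteq> 3"
    have "mmul (madj (chi2Z q a)) (chi2Z q a) (L,M) (L,M) = 0"
      by (rule mmul_diag0) (use a in \<open>auto simp: chi2Z_def\<close>)
    then show ?thesis unfolding phi3_plus_def using q3 a by (simp add: s5rep_def)
  qed
qed

lemma G0:
  fixes s :: real assumes "0 < s" "s < 1"
  shows "((\<lambda>i::nat. s^i) has_sum 1/(1-s)) UNIV"
  by (rule sums_nonneg_imp_has_sum) (use assms geometric_sums[of s] in auto)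

lemma G1:
  fixes s :: real assumes "0 < s" "s < 1"
  shows "((\<lambda>i::nat. real (Suc i) * s^i) has_sum 1/(1-s)^2) UNIV"
  by (rule sums_nonneg_imp_has_sum) (use assms geometric_deriv_sums[of s] in auto)

definition u1 :: "real \<Rightarrow> nat \<times> nat \<Rightarrow> real" where
  "u1 s j = (if snd j \<le> fst j then s ^ fst j else 0)"
definition u2 :: "real \<Rightarrow> nat \<times> nat \<Rightarrow> real" where
  "u2 s j = (if snd j \<le> fst j then 0 else s ^ snd j)"

lemma U1:
  fixes s :: real assumes "0 < s" "s < 1"
  shows "(u1 s has_sum 1/(1-s)^2) UNIV"
proof -
  have row: "((\<lambda>M. u1 s (L, M)) has_sum (real (Suc L) * s^L)) UNIV" for L
    by (rule has_sum_finite_neutralI[of "{..L}"]) (auto simp: u1_def)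
  have sm: "u1 s summable_on Sigma UNIV (\<lambda>_. UNIV)"
    by (rule summable_on_SigmaI[OF row]) (use G1[OF assms] assms in \<open>auto simp: u1_def summable_on_def\<close>)
  have "(u1 s has_sum 1/(1-s)^2) (Sigma UNIV (\<lambda>_. UNIV))"
    by (rule has_sum_SigmaI[OF row G1[OF assms] sm])
  then show ?thesis by simp
qed

lemma U2:
  fixes s :: real assumes "0 < s" "s < 1"
  shows "(u2 s has_sum s/(1-s)^2) UNIV"
proof -
  have row: "((\<lambda>M. u2 s (L, M)) has_sum (s * s^L / (1 - s))) UNIV" for L
  proof -
    have fin: "((\<lambda>M. - (if M \<le> L then s^M else 0)) has_sum - (\<Sum>M\<le>L. s^M)) UNIV"
      by (subst has_sum_uminus) (rule has_sum_finite_neutralI[of "{..L}"], auto)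
    have "((\<lambda>M. s^M + - (if M \<le> L then s^M else 0)) has_sum (1/(1-s) + - (\<Sum>M\<le>L. s^M))) UNIV"
      by (rule has_sum_add[OF G0[OF assms] fin])
    moreover have "1/(1-s) + - (\<Sum>M\<le>L. s^M) = s * s^L / (1 - s)"
    proof -
      have "(1 - s) * (\<Sum>M\<le>L. s^M) = 1 - s^Suc L" by (rule sum_gp_basic)
      then have "(\<Sum>M\<le>L. s^M) = (1 - s^Suc L) / (1 - s)" using assms by (simp add: field_simps)
      then show ?thesis using assms by (simp add: field_simps)
    qed
    moreover have "(\<lambda>M. s^M + - (if M \<le> L then s^M else 0)) = (\<lambda>M. u2 s (L, M))"
      by (auto simp: u2_def)
    ultimately show ?thesis by simp
  qed
  have g: "((\<lambda>L. s * s^L / (1 - s)) has_sum s/(1-s)^2) UNIV"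
  proof -
    have "((\<lambda>L. (s / (1 - s)) * s^L) has_sum (s / (1 - s)) * (1/(1-s))) UNIV"
      by (rule has_sum_cmult_right[OF G0[OF assms]])
    moreover have "(s / (1 - s)) * (1/(1-s)) = s/(1-s)^2" by (simp add: power2_eq_square)
    moreover have "(\<lambda>L. (s / (1 - s)) * s^L) = (\<lambda>L. s * s^L / (1 - s))" by auto
    ultimately show ?thesis by metis
  qed
  have sm: "u2 s summable_on Sigma UNIV (\<lambda>_. UNIV)"
    by (rule summable_on_SigmaI[OF row]) (use g assms in \<open>auto simp: u2_def summable_on_def\<close>)
  have "(u2 s has_sum s/(1-s)^2) (Sigma UNIV (\<lambda>_. UNIV))"
    by (rule has_sum_SigmaI[OF row g sm])
  then show ?thesis by simp
qed

lemma comb2: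
  fixes s :: real assumes "0 < s" "s < 1"
  shows "((\<lambda>j. complex_of_real (c1 * u1 s j + c2 * u2 s j)) has_sum
           complex_of_real (c1 * (1/(1-s)^2) + c2 * (s/(1-s)^2))) UNIV"
  by (rule has_sum_of_real, rule has_sum_add; rule has_sum_cmult_right) (use U1[OF assms] U2[OF assms] in auto)

lemma comb1:
  fixes s :: real assumes "0 < s" "s < 1"
  shows "((\<lambda>i::nat. complex_of_real (c * s^i)) has_sum complex_of_real (c * (1/(1-s)))) UNIV"
  by (rule has_sum_of_real, rule has_sum_cmult_right, rule G0[OF assms])

lemma has_sum_fin_Sigma:
  fixes g :: "'a \<times> 'b \<Rightarrow> 'c::topological_comm_monoid_add"
  assumes "finite A" "\<And>a. a \<in> A \<Longrightarrow> ((\<lambda>i. g (a,i)) has_sum S a) X"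
  shows "(g has_sum (\<Sum>a\<in>A. S a)) (A \<times> X)"
  using assms
proof (induction A rule: finite_induct)
  case empty then show ?case by simp
next
  case (insert a A)
  have 1: "(g has_sum S a) ({a} \<times> X)"
  proof -
    have "((\<lambda>i. g (a,i)) has_sum S a) X" using insert by simp
    then have "((g \<circ> Pair a) has_sum S a) X" by (simp add: o_def)
    then have "(g has_sum S a) (Pair a ` X)" by (subst has_sum_reindex) (auto simp: inj_on_def)
    moreover have "Pair a ` X = {a} \<times> X" by auto
    ultimately show ?thesis by simp
  qed
  have 2: "(g has_sum (\<Sum>a\<in>A. S a)) (A \<times> X)" using insert by simp
  have "(g has_sum (S a + (\<Sum>a\<in>A. S a))) ({a} \<times> X \<union> A \<times> X)"
    using 1 2 insert(2) by (intro has_sum_Un_disjoint) auto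
  moreover have "{a} \<times> X \<union> A \<times> X = insert a A \<times> X" by auto
  ultimately show ?case using insert by simp
qed

definition dl :: "'b repn \<Rightarrow> 'b repn \<Rightarrow> nat \<Rightarrow> 'b \<Rightarrow> complex" where
  "dl rp rm b i = snd rp b b i i - snd rm b b i i"

lemma DP0: "evalr rp (snd P_one a a) i i - evalr rm (snd P_one a a) i i = fst rp i i - fst rm i i"
  by (simp add: evalr_def P_one_def one_e_def)

lemma DP1: "a \<in> {1,2,3} \<Longrightarrow>
   evalr rp (snd P_plus1 a a) i i - evalr rm (snd P_plus1 a a) i i = dl rp rm a i"
  by (auto simp add: evalr_def P_plus1_def pe_def dl_def)

lemma DPm1_1: "evalr rp (snd (P_minus1 q) 1 1) i i - evalr rm (snd (P_minus1 q) 1 1) i i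
   = complex_of_real (q^2 * q^2) * dl rp rm 1 i"
  apply (simp add: evalr_def P_minus1_def zzs_def cm1_def escale_def eadd_def pe_def dl_def)
  by algebra

lemmas DPm1_1s = DPm1_1[unfolded One_nat_def]

lemma DPm1_2: "evalr rp (snd (P_minus1 q) 2 2) i i - evalr rm (snd (P_minus1 q) 2 2) i i
   = complex_of_real (q^2) * (dl rp rm 2 i - complex_of_real (1 - q^2) * dl rp rm 1 i)"
  apply (simp add: evalr_def P_minus1_def zzs_def cm1_def escale_def eadd_def pe_def dl_def)
  by algebra

lemma DPm1_3: "evalr rp (snd (P_minus1 q) 3 3) i i - evalr rm (snd (P_minus1 q) 3 3) i i
   = dl rp rm 3 i - complex_of_real (1 - q^2) * (dl rp rm 1 i + dl rp rm 2 i
        - complex_of_real (1 - q^2) * dl rp rm 1 i)"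
  apply (simp add: evalr_def P_minus1_def zzs_def cm1_def escale_def eadd_def pe_def dl_def)
  by algebra

lemma dl2:
  assumes "0 < q" "q < 1"
  shows "dl (phi2_plus q) phi2_minus b i =
    (if b = 2 then complex_of_real ((q^2)^i) else if b = 3 then complex_of_real (- (q^2 * (q^2)^i)) else 0)"
  using assms by (simp add: dl_def phi2p phi2m)

lemma dl3:
  assumes "0 < q" "q < 1"
  shows "dl (phi3_plus q) (phi3_minus q) b j =
    (if b = 1 then complex_of_real (u1 (q^2) j)
     else if b = 2 then complex_of_real (- (q^2) * u1 (q^2) j - u2 (q^2) j)
     else if b = 3 then complex_of_real (q^2 * u2 (q^2) j) else 0)"
proof (cases j)
  case (Pair L M)
  show ?thesis using assms unfolding Pair
    by (cases "M \<le> L") (simp_all add: dl_def phi3p phi3m u1_def u2_def)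
qed

lemma dl1: "dl phi1_plus phi1_minus b i = (if b = 3 then 1 else 0)"
  by (simp add: dl_def phi1_plus_def phi1_minus_def chi0rep_def zero_rep_def idm_def)

lemma IP1:
  assumes "fst e = 1" "((\<lambda>i. evalr rp (snd e 1 1) i i - evalr rm (snd e 1 1) i i) has_sum S) UNIV"
  shows "index_pairing rp rm e = S"
proof -
  have "((\<lambda>(a,i). evalr rp (snd e a a) i i - evalr rm (snd e a a) i i) has_sum (\<Sum>a\<in>{1::nat}. S)) ({1} \<times> UNIV)"
    by (rule has_sum_fin_Sigma[where S="\<lambda>_. S"]) (use assms in auto)
  then show ?thesis unfolding index_pairing_def using assms(1) by (simp add: infsumI)
qed

lemma IP3:
  assumes "fst e = 3"
    "\<And>a. a \<in> {1,2,3} \<Longrightarrow> ((\<lambda>i. evalr rp (snd e a a) i i - evalr rm (snd e a a) i i) has_sum S a) UNIV"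
  shows "index_pairing rp rm e = S 1 + S 2 + S 3"
proof -
  have "((\<lambda>(a,i). evalr rp (snd e a a) i i - evalr rm (snd e a a) i i) has_sum (\<Sum>a\<in>{1,2,3}. S a)) ({1,2,3} \<times> UNIV)"
    by (rule has_sum_fin_Sigma) (use assms in auto)
  moreover have "{1..fst e} = {1,2,3}" using assms(1) by auto
  ultimately show ?thesis unfolding index_pairing_def by (simp add: infsumI add.assoc)
qed

lemma has_sum_eq_fun: "(\<And>i. f i = g i) \<Longrightarrow> (g has_sum S) A \<Longrightarrow> (f has_sum S) A"
  by (metis ext)

lemma s_bounds: "0 < (q::real) \<Longrightarrow> q < 1 \<Longrightarrow> 0 < q^2 \<and> q^2 < 1"
  by (simp add: power_less_one_iff)

lemma Rq1:
  fixes x :: real assumes "x \<noteq> 1"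
  shows "(0) + ((x) * (1/(1-x))) + ((-1) * (1/(1-x))) = -1"
proof -
  have d: "1 - x \<noteq> 0" using assms by simp
  have "(0) + ((x) * (1/(1-x))) + ((-1) * (1/(1-x))) = - ((1 - x) / (1 - x))"
    by (simp add: field_simps)
  also have "\<dots> = -1" using d by simp
  finally show ?thesis .
qed

lemma Rq2:
  fixes x :: real assumes "x \<noteq> 1"
  shows "(0) + ((1) * (1/(1-x))) + ((-(x)) * (1/(1-x))) = 1"
proof -
  have d: "1 - x \<noteq> 0" using assms by simp
  have d2: "(1 - x)^2 \<noteq> 0" using assms by simp
  show ?thesis using d d2 by (simp add: field_simps) (simp add: algebra_simps power2_eq_square)?
qed

lemma Rq3:
  fixes x :: real assumes "x \<noteq> 1"
  shows "((x*x) * (1/(1-x)^2) + (0) * (x/(1-x)^2)) + ((-(x)) * (1/(1-x)^2) + (-(x)) * (x/(1-x)^2)) + ((0) * (1/(1-x)^2) + (1) * (x/(1-x)^2)) = 0"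
proof -
  have d: "1 - x \<noteq> 0" using assms by simp
  have d2: "(1 - x)^2 \<noteq> 0" using assms by simp
  show ?thesis using d d2 by (simp add: field_simps) (simp add: algebra_simps power2_eq_square)?
qed

lemma Rq4:
  fixes x :: real assumes "x \<noteq> 1"
  shows "((1) * (1/(1-x)^2) + (0) * (x/(1-x)^2)) + ((-(x)) * (1/(1-x)^2) + (-1) * (x/(1-x)^2)) + ((0) * (1/(1-x)^2) + (x) * (x/(1-x)^2)) = 1"
proof -
  have d: "1 - x \<noteq> 0" using assms by simp
  have d2: "(1 - x)^2 \<noteq> 0" using assms by simp
  show ?thesis using d d2 by (simp add: field_simps) (simp add: algebra_simps power2_eq_square)?
qed

lemma pair11:
  assumes "0 < q" "q < 1"
  shows "index_pairing (phi1_plus) (phi1_minus) (proj q 1) = 1"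
proof -
  have s: "0 < q^2" "q^2 < 1" using s_bounds[OF assms] by auto
  have c1: "((\<lambda>i. evalr (phi1_plus) (snd (proj q 1) 1 1) i i - evalr (phi1_minus) (snd (proj q 1) 1 1) i i) has_sum (1)) UNIV"
    by (rule has_sum_finiteI) (simp_all add: proj_def DP0 dl1 phi1_plus_def phi1_minus_def phi2_plus_def phi2_minus_def phi3_plus_def phi3_minus_def s5rep_def chi0rep_def zero_rep_def idm_def UNIV_unit)
  have "index_pairing (phi1_plus) (phi1_minus) (proj q 1) = 1"
    by (rule IP1) (use c1 in \<open>simp_all add: proj_def P_one_def\<close>)
  then show ?thesis by simp
qed

lemma pair12:
  assumes "0 < q" "q < 1"
  shows "index_pairing (phi1_plus) (phi1_minus) (proj q 2) = 1"
proof -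
  have s: "0 < q^2" "q^2 < 1" using s_bounds[OF assms] by auto
  have c1: "((\<lambda>i. evalr (phi1_plus) (snd (proj q 2) 1 1) i i - evalr (phi1_minus) (snd (proj q 2) 1 1) i i) has_sum (0)) UNIV"
    by (rule has_sum_finiteI) (simp_all add: proj_def DPm1_1 DPm1_1s dl1 UNIV_unit)
  have c2: "((\<lambda>i. evalr (phi1_plus) (snd (proj q 2) 2 2) i i - evalr (phi1_minus) (snd (proj q 2) 2 2) i i) has_sum (0)) UNIV"
    by (rule has_sum_finiteI) (simp_all add: proj_def DPm1_2 dl1 UNIV_unit)
  have c3: "((\<lambda>i. evalr (phi1_plus) (snd (proj q 2) 3 3) i i - evalr (phi1_minus) (snd (proj q 2) 3 3) i i) has_sum (1)) UNIV"
    by (rule has_sum_finiteI) (simp_all add: proj_def DPm1_3 dl1 UNIV_unit)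
  have "index_pairing (phi1_plus) (phi1_minus) (proj q 2) = (\<lambda>a::nat. if a = 1 then 0 else if a = 2 then 0 else 1) 1 + (\<lambda>a::nat. if a = 1 then 0 else if a = 2 then 0 else 1) 2 + (\<lambda>a::nat. if a = 1 then 0 else if a = 2 then 0 else 1) 3"
  proof (rule IP3)
    show "fst (proj q 2) = 3" by (simp add: proj_def P_minus1_def P_plus1_def)
  next
    fix a :: nat assume "a \<in> {1,2,3}"
    then show "((\<lambda>i. evalr (phi1_plus) (snd (proj q 2) a a) i i - evalr (phi1_minus) (snd (proj q 2) a a) i i) has_sum
       (\<lambda>a::nat. if a = 1 then 0 else if a = 2 then 0 else 1) a) UNIV"
      using c1 c2 c3 by auto
  qed
  also have "\<dots> = 1"
    by simp
  finally show ?thesis .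
qed

lemma pair13:
  assumes "0 < q" "q < 1"
  shows "index_pairing (phi1_plus) (phi1_minus) (proj q 3) = 1"
proof -
  have s: "0 < q^2" "q^2 < 1" using s_bounds[OF assms] by auto
  have c1: "((\<lambda>i. evalr (phi1_plus) (snd (proj q 3) 1 1) i i - evalr (phi1_minus) (snd (proj q 3) 1 1) i i) has_sum (0)) UNIV"
    by (rule has_sum_finiteI) (simp_all add: proj_def DP1 dl1 UNIV_unit)
  have c2: "((\<lambda>i. evalr (phi1_plus) (snd (proj q 3) 2 2) i i - evalr (phi1_minus) (snd (proj q 3) 2 2) i i) has_sum (0)) UNIV"
    by (rule has_sum_finiteI) (simp_all add: proj_def DP1 dl1 UNIV_unit)
  have c3: "((\<lambda>i. evalr (phi1_plus) (snd (proj q 3) 3 3) i i - evalr (phi1_minus) (snd (proj q 3) 3 3) i i) has_sum (1)) UNIV"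
    by (rule has_sum_finiteI) (simp_all add: proj_def DP1 dl1 UNIV_unit)
  have "index_pairing (phi1_plus) (phi1_minus) (proj q 3) = (\<lambda>a::nat. if a = 1 then 0 else if a = 2 then 0 else 1) 1 + (\<lambda>a::nat. if a = 1 then 0 else if a = 2 then 0 else 1) 2 + (\<lambda>a::nat. if a = 1 then 0 else if a = 2 then 0 else 1) 3"
  proof (rule IP3)
    show "fst (proj q 3) = 3" by (simp add: proj_def P_minus1_def P_plus1_def)
  next
    fix a :: nat assume "a \<in> {1,2,3}"
    then show "((\<lambda>i. evalr (phi1_plus) (snd (proj q 3) a a) i i - evalr (phi1_minus) (snd (proj q 3) a a) i i) has_sum
       (\<lambda>a::nat. if a = 1 then 0 else if a = 2 then 0 else 1) a) UNIV"
      using c1 c2 c3 by auto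
  qed
  also have "\<dots> = 1"
    by simp
  finally show ?thesis .
qed

lemma pair21:
  assumes "0 < q" "q < 1"
  shows "index_pairing (phi2_plus q) (phi2_minus) (proj q 1) = 0"
proof -
  have s: "0 < q^2" "q^2 < 1" using s_bounds[OF assms] by auto
  have c1: "((\<lambda>i. evalr (phi2_plus q) (snd (proj q 1) 1 1) i i - evalr (phi2_minus) (snd (proj q 1) 1 1) i i) has_sum (0)) UNIV"
    by (rule has_sum_eq_fun[where g="\<lambda>_. 0"]) (simp_all add: proj_def DP0 dl2[OF assms] phi1_plus_def phi1_minus_def phi2_plus_def phi2_minus_def phi3_plus_def phi3_minus_def s5rep_def chi0rep_def zero_rep_def idm_def)
  have "index_pairing (phi2_plus q) (phi2_minus) (proj q 1) = 0"
    by (rule IP1) (use c1 in \<open>simp_all add: proj_def P_one_def\<close>)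
  then show ?thesis by simp
qed

lemma pair22:
  assumes "0 < q" "q < 1"
  shows "index_pairing (phi2_plus q) (phi2_minus) (proj q 2) = -1"
proof -
  have s: "0 < q^2" "q^2 < 1" using s_bounds[OF assms] by auto
  have c1: "((\<lambda>i. evalr (phi2_plus q) (snd (proj q 2) 1 1) i i - evalr (phi2_minus) (snd (proj q 2) 1 1) i i) has_sum (0)) UNIV"
    by (rule has_sum_eq_fun[where g="\<lambda>_. 0"]) (simp_all add: proj_def DPm1_1 DPm1_1s dl2[OF assms])
  have c2: "((\<lambda>i. evalr (phi2_plus q) (snd (proj q 2) 2 2) i i - evalr (phi2_minus) (snd (proj q 2) 2 2) i i) has_sum (complex_of_real ((q^2) * (1/(1-q^2))))) UNIV"
    by (rule has_sum_eq_fun[OF _ comb1[OF s, of "q^2"]]) (simp add: proj_def DPm1_2 dl2[OF assms] algebra_simps)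
  have c3: "((\<lambda>i. evalr (phi2_plus q) (snd (proj q 2) 3 3) i i - evalr (phi2_minus) (snd (proj q 2) 3 3) i i) has_sum (complex_of_real ((-1) * (1/(1-q^2))))) UNIV"
    by (rule has_sum_eq_fun[OF _ comb1[OF s, of "-1"]]) (simp add: proj_def DPm1_3 dl2[OF assms] algebra_simps)
  have "index_pairing (phi2_plus q) (phi2_minus) (proj q 2) = (\<lambda>a::nat. if a = 1 then 0 else if a = 2 then complex_of_real ((q^2) * (1/(1-q^2))) else complex_of_real ((-1) * (1/(1-q^2)))) 1 + (\<lambda>a::nat. if a = 1 then 0 else if a = 2 then complex_of_real ((q^2) * (1/(1-q^2))) else complex_of_real ((-1) * (1/(1-q^2)))) 2 + (\<lambda>a::nat. if a = 1 then 0 else if a = 2 then complex_of_real ((q^2) * (1/(1-q^2))) else complex_of_real ((-1) * (1/(1-q^2)))) 3"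
  proof (rule IP3)
    show "fst (proj q 2) = 3" by (simp add: proj_def P_minus1_def P_plus1_def)
  next
    fix a :: nat assume "a \<in> {1,2,3}"
    then show "((\<lambda>i. evalr (phi2_plus q) (snd (proj q 2) a a) i i - evalr (phi2_minus) (snd (proj q 2) a a) i i) has_sum
       (\<lambda>a::nat. if a = 1 then 0 else if a = 2 then complex_of_real ((q^2) * (1/(1-q^2))) else complex_of_real ((-1) * (1/(1-q^2)))) a) UNIV"
      using c1 c2 c3 by auto
  qed
  also have "\<dots> = complex_of_real ((0) + ((q^2) * (1/(1-q^2))) + ((-1) * (1/(1-q^2))))" by simp
  also have "(0) + ((q^2) * (1/(1-q^2))) + ((-1) * (1/(1-q^2))) = -1"
    by (rule Rq1) (use s in auto)
  finally show ?thesis by simp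
qed

lemma pair23:
  assumes "0 < q" "q < 1"
  shows "index_pairing (phi2_plus q) (phi2_minus) (proj q 3) = 1"
proof -
  have s: "0 < q^2" "q^2 < 1" using s_bounds[OF assms] by auto
  have c1: "((\<lambda>i. evalr (phi2_plus q) (snd (proj q 3) 1 1) i i - evalr (phi2_minus) (snd (proj q 3) 1 1) i i) has_sum (0)) UNIV"
    by (rule has_sum_eq_fun[where g="\<lambda>_. 0"]) (simp_all add: proj_def DP1 dl2[OF assms])
  have c2: "((\<lambda>i. evalr (phi2_plus q) (snd (proj q 3) 2 2) i i - evalr (phi2_minus) (snd (proj q 3) 2 2) i i) has_sum (complex_of_real ((1) * (1/(1-q^2))))) UNIV"
    by (rule has_sum_eq_fun[OF _ comb1[OF s, of "1"]]) (simp add: proj_def DP1 dl2[OF assms] algebra_simps)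
  have c3: "((\<lambda>i. evalr (phi2_plus q) (snd (proj q 3) 3 3) i i - evalr (phi2_minus) (snd (proj q 3) 3 3) i i) has_sum (complex_of_real ((-(q^2)) * (1/(1-q^2))))) UNIV"
    by (rule has_sum_eq_fun[OF _ comb1[OF s, of "-(q^2)"]]) (simp add: proj_def DP1 dl2[OF assms] algebra_simps)
  have "index_pairing (phi2_plus q) (phi2_minus) (proj q 3) = (\<lambda>a::nat. if a = 1 then 0 else if a = 2 then complex_of_real ((1) * (1/(1-q^2))) else complex_of_real ((-(q^2)) * (1/(1-q^2)))) 1 + (\<lambda>a::nat. if a = 1 then 0 else if a = 2 then complex_of_real ((1) * (1/(1-q^2))) else complex_of_real ((-(q^2)) * (1/(1-q^2)))) 2 + (\<lambda>a::nat. if a = 1 then 0 else if a = 2 then complex_of_real ((1) * (1/(1-q^2))) else complex_of_real ((-(q^2)) * (1/(1-q^2)))) 3"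
  proof (rule IP3)
    show "fst (proj q 3) = 3" by (simp add: proj_def P_minus1_def P_plus1_def)
  next
    fix a :: nat assume "a \<in> {1,2,3}"
    then show "((\<lambda>i. evalr (phi2_plus q) (snd (proj q 3) a a) i i - evalr (phi2_minus) (snd (proj q 3) a a) i i) has_sum
       (\<lambda>a::nat. if a = 1 then 0 else if a = 2 then complex_of_real ((1) * (1/(1-q^2))) else complex_of_real ((-(q^2)) * (1/(1-q^2)))) a) UNIV"
      using c1 c2 c3 by auto
  qed
  also have "\<dots> = complex_of_real ((0) + ((1) * (1/(1-q^2))) + ((-(q^2)) * (1/(1-q^2))))" by simp
  also have "(0) + ((1) * (1/(1-q^2))) + ((-(q^2)) * (1/(1-q^2))) = 1"
    by (rule Rq2) (use s in auto)
  finally show ?thesis by simp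
qed

lemma pair31:
  assumes "0 < q" "q < 1"
  shows "index_pairing (phi3_plus q) (phi3_minus q) (proj q 1) = 0"
proof -
  have s: "0 < q^2" "q^2 < 1" using s_bounds[OF assms] by auto
  have c1: "((\<lambda>i. evalr (phi3_plus q) (snd (proj q 1) 1 1) i i - evalr (phi3_minus q) (snd (proj q 1) 1 1) i i) has_sum (0)) UNIV"
    by (rule has_sum_eq_fun[where g="\<lambda>_. 0"]) (simp_all add: proj_def DP0 dl3[OF assms] phi1_plus_def phi1_minus_def phi2_plus_def phi2_minus_def phi3_plus_def phi3_minus_def s5rep_def chi0rep_def zero_rep_def idm_def)
  have "index_pairing (phi3_plus q) (phi3_minus q) (proj q 1) = 0"
    by (rule IP1) (use c1 in \<open>simp_all add: proj_def P_one_def\<close>)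
  then show ?thesis by simp
qed

lemma pair32:
  assumes "0 < q" "q < 1"
  shows "index_pairing (phi3_plus q) (phi3_minus q) (proj q 2) = 0"
proof -
  have s: "0 < q^2" "q^2 < 1" using s_bounds[OF assms] by auto
  have c1: "((\<lambda>i. evalr (phi3_plus q) (snd (proj q 2) 1 1) i i - evalr (phi3_minus q) (snd (proj q 2) 1 1) i i) has_sum (complex_of_real ((q^2*q^2) * (1/(1-q^2)^2) + (0) * (q^2/(1-q^2)^2)))) UNIV"
    by (rule has_sum_eq_fun[OF _ comb2[OF s, of "q^2*q^2" "0"]]) (simp add: proj_def DPm1_1 DPm1_1s dl3[OF assms] algebra_simps)
  have c2: "((\<lambda>i. evalr (phi3_plus q) (snd (proj q 2) 2 2) i i - evalr (phi3_minus q) (snd (proj q 2) 2 2) i i) has_sum (complex_of_real ((-(q^2)) * (1/(1-q^2)^2) + (-(q^2)) * (q^2/(1-q^2)^2)))) UNIV"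
    by (rule has_sum_eq_fun[OF _ comb2[OF s, of "-(q^2)" "-(q^2)"]]) (simp add: proj_def DPm1_2 dl3[OF assms] algebra_simps)
  have c3: "((\<lambda>i. evalr (phi3_plus q) (snd (proj q 2) 3 3) i i - evalr (phi3_minus q) (snd (proj q 2) 3 3) i i) has_sum (complex_of_real ((0) * (1/(1-q^2)^2) + (1) * (q^2/(1-q^2)^2)))) UNIV"
    by (rule has_sum_eq_fun[OF _ comb2[OF s, of "0" "1"]]) (simp add: proj_def DPm1_3 dl3[OF assms] algebra_simps)
  have "index_pairing (phi3_plus q) (phi3_minus q) (proj q 2) = (\<lambda>a::nat. if a = 1 then complex_of_real ((q^2*q^2) * (1/(1-q^2)^2) + (0) * (q^2/(1-q^2)^2)) else if a = 2 then complex_of_real ((-(q^2)) * (1/(1-q^2)^2) + (-(q^2)) * (q^2/(1-q^2)^2)) else complex_of_real ((0) * (1/(1-q^2)^2) + (1) * (q^2/(1-q^2)^2))) 1 + (\<lambda>a::nat. if a = 1 then complex_of_real ((q^2*q^2) * (1/(1-q^2)^2) + (0) * (q^2/(1-q^2)^2)) else if a = 2 then complex_of_real ((-(q^2)) * (1/(1-q^2)^2) + (-(q^2)) * (q^2/(1-q^2)^2)) else complex_of_real ((0) * (1/(1-q^2)^2) + (1) * (q^2/(1-q^2)^2))) 2 + (\<lambda>a::nat. if a = 1 then complex_of_real ((q^2*q^2) * (1/(1-q^2)^2) + (0) * (q^2/(1-q^2)^2)) else if a = 2 then complex_of_real ((-(q^2)) * (1/(1-q^2)^2) + (-(q^2))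 * (q^2/(1-q^2)^2)) else complex_of_real ((0) * (1/(1-q^2)^2) + (1) * (q^2/(1-q^2)^2))) 3"
  proof (rule IP3)
    show "fst (proj q 2) = 3" by (simp add: proj_def P_minus1_def P_plus1_def)
  next
    fix a :: nat assume "a \<in> {1,2,3}"
    then show "((\<lambda>i. evalr (phi3_plus q) (snd (proj q 2) a a) i i - evalr (phi3_minus q) (snd (proj q 2) a a) i i) has_sum
       (\<lambda>a::nat. if a = 1 then complex_of_real ((q^2*q^2) * (1/(1-q^2)^2) + (0) * (q^2/(1-q^2)^2)) else if a = 2 then complex_of_real ((-(q^2)) * (1/(1-q^2)^2) + (-(q^2)) * (q^2/(1-q^2)^2)) else complex_of_real ((0) * (1/(1-q^2)^2) + (1) * (q^2/(1-q^2)^2))) a) UNIV"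
      using c1 c2 c3 by auto
  qed
  also have "\<dots> = complex_of_real (((q^2*q^2) * (1/(1-q^2)^2) + (0) * (q^2/(1-q^2)^2)) + ((-(q^2)) * (1/(1-q^2)^2) + (-(q^2)) * (q^2/(1-q^2)^2)) + ((0) * (1/(1-q^2)^2) + (1) * (q^2/(1-q^2)^2)))" by simp
  also have "((q^2*q^2) * (1/(1-q^2)^2) + (0) * (q^2/(1-q^2)^2)) + ((-(q^2)) * (1/(1-q^2)^2) + (-(q^2)) * (q^2/(1-q^2)^2)) + ((0) * (1/(1-q^2)^2) + (1) * (q^2/(1-q^2)^2)) = 0"
    by (rule Rq3) (use s in auto)
  finally show ?thesis by simp
qed

lemma pair33:
  assumes "0 < q" "q < 1"
  shows "index_pairing (phi3_plus q) (phi3_minus q) (proj q 3) = 1"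
proof -
  have s: "0 < q^2" "q^2 < 1" using s_bounds[OF assms] by auto
  have c1: "((\<lambda>i. evalr (phi3_plus q) (snd (proj q 3) 1 1) i i - evalr (phi3_minus q) (snd (proj q 3) 1 1) i i) has_sum (complex_of_real ((1) * (1/(1-q^2)^2) + (0) * (q^2/(1-q^2)^2)))) UNIV"
    by (rule has_sum_eq_fun[OF _ comb2[OF s, of "1" "0"]]) (simp add: proj_def DP1 dl3[OF assms] algebra_simps)
  have c2: "((\<lambda>i. evalr (phi3_plus q) (snd (proj q 3) 2 2) i i - evalr (phi3_minus q) (snd (proj q 3) 2 2) i i) has_sum (complex_of_real ((-(q^2)) * (1/(1-q^2)^2) + (-1) * (q^2/(1-q^2)^2)))) UNIV"
    by (rule has_sum_eq_fun[OF _ comb2[OF s, of "-(q^2)" "-1"]]) (simp add: proj_def DP1 dl3[OF assms] algebra_simps)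
  have c3: "((\<lambda>i. evalr (phi3_plus q) (snd (proj q 3) 3 3) i i - evalr (phi3_minus q) (snd (proj q 3) 3 3) i i) has_sum (complex_of_real ((0) * (1/(1-q^2)^2) + (q^2) * (q^2/(1-q^2)^2)))) UNIV"
    by (rule has_sum_eq_fun[OF _ comb2[OF s, of "0" "q^2"]]) (simp add: proj_def DP1 dl3[OF assms] algebra_simps)
  have "index_pairing (phi3_plus q) (phi3_minus q) (proj q 3) = (\<lambda>a::nat. if a = 1 then complex_of_real ((1) * (1/(1-q^2)^2) + (0) * (q^2/(1-q^2)^2)) else if a = 2 then complex_of_real ((-(q^2)) * (1/(1-q^2)^2) + (-1) * (q^2/(1-q^2)^2)) else complex_of_real ((0) * (1/(1-q^2)^2) + (q^2) * (q^2/(1-q^2)^2))) 1 + (\<lambda>a::nat. if a = 1 then complex_of_real ((1) * (1/(1-q^2)^2) + (0) * (q^2/(1-q^2)^2)) else if a = 2 then complex_of_real ((-(q^2)) * (1/(1-q^2)^2) + (-1) * (q^2/(1-q^2)^2)) else complex_of_real ((0) * (1/(1-q^2)^2) + (q^2) * (q^2/(1-q^2)^2))) 2 + (\<lambda>a::nat. if a = 1 then complex_of_real ((1) * (1/(1-q^2)^2) + (0) * (q^2/(1-q^2)^2)) else if a = 2 then complex_of_real ((-(q^2)) * (1/(1-q^2)^2) + (-1) * (q^2/(1-q^2)^2)) else complex_of_real ((0) * (1/(1-q^2)^2) + (q^2) * (q^2/(1-q^2)^2))) 3"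
  proof (rule IP3)
    show "fst (proj q 3) = 3" by (simp add: proj_def P_minus1_def P_plus1_def)
  next
    fix a :: nat assume "a \<in> {1,2,3}"
    then show "((\<lambda>i. evalr (phi3_plus q) (snd (proj q 3) a a) i i - evalr (phi3_minus q) (snd (proj q 3) a a) i i) has_sum
       (\<lambda>a::nat. if a = 1 then complex_of_real ((1) * (1/(1-q^2)^2) + (0) * (q^2/(1-q^2)^2)) else if a = 2 then complex_of_real ((-(q^2)) * (1/(1-q^2)^2) + (-1) * (q^2/(1-q^2)^2)) else complex_of_real ((0) * (1/(1-q^2)^2) + (q^2) * (q^2/(1-q^2)^2))) a) UNIV"
      using c1 c2 c3 by auto
  qed
  also have "\<dots> = complex_of_real (((1) * (1/(1-q^2)^2) + (0) * (q^2/(1-q^2)^2)) + ((-(q^2)) * (1/(1-q^2)^2) + (-1) * (q^2/(1-q^2)^2)) + ((0) * (1/(1-q^2)^2) + (q^2) * (q^2/(1-q^2)^2)))" by simp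
  also have "((1) * (1/(1-q^2)^2) + (0) * (q^2/(1-q^2)^2)) + ((-(q^2)) * (1/(1-q^2)^2) + (-1) * (q^2/(1-q^2)^2)) + ((0) * (1/(1-q^2)^2) + (q^2) * (q^2/(1-q^2)^2)) = 1"
    by (rule Rq4) (use s in auto)
  finally show ?thesis by simp
qed




lemma iter_hom:
  fixes h :: "'a::ab_group_add \<Rightarrow> 'b::ab_group_add"
  assumes add: "\<And>x y. h (x + y) = h x + h y"
  shows "h ((((+) x) ^^ n) 0) = (((+) (h x)) ^^ n) 0"
proof (induction n)
  case 0
  have "h 0 = h 0 + h 0" using add[of 0 0] by simp
  then show ?case by simp
next
  case (Suc n) then show ?case by (simp add: add)
qed

lemma hom_zero: fixes h :: "'a::ab_group_add \<Rightarrow> 'b::ab_group_add"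
  assumes add: "\<And>x y. h (x + y) = h x + h y" shows "h 0 = 0"
  using add[of 0 0] by simp

lemma hom_minus: fixes h :: "'a::ab_group_add \<Rightarrow> 'b::ab_group_add"
  assumes add: "\<And>x y. h (x + y) = h x + h y" shows "h (- x) = - h x"
proof -
  have "h x + h (- x) = 0" using add[of x "-x"] hom_zero[OF add] by simp
  then have "- h x = h (- x)" by (rule minus_unique)
  then show ?thesis by simp
qed

lemma zmul_hom:
  fixes h :: "'a::ab_group_add \<Rightarrow> 'b::ab_group_add"
  assumes add: "\<And>x y. h (x + y) = h x + h y"
  shows "h (zmul m x) = zmul m (h x)"
  unfolding zmul_def using iter_hom[OF add] hom_minus[OF add] by simp

lemma zmul_int: "zmul m (a::int) = m * a"
proof -
  have it: "(((+) a) ^^ n) 0 = int n * a" for n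
    by (induction n) (auto simp: algebra_simps)
  show ?thesis unfolding zmul_def it by auto
qed

lemma zmul_int3: "zmul m ((a::int), (b::int), (c::int)) = (m * a, m * b, m * c)"
proof -
  have it: "(((+) (a,b,c)) ^^ n) 0 = (int n * a, int n * b, int n * c)" for n
    by (induction n) (auto simp: algebra_simps zero_prod_def)
  show ?thesis unfolding zmul_def it by auto
qed

definition rv :: "int \<times> int \<times> int \<Rightarrow> real \<times> real \<times> real" where
  "rv v = (real_of_int (fst v), real_of_int (fst (snd v)), real_of_int (snd (snd v)))"

lemma rv_inj: "rv v = rv w \<Longrightarrow> v = w"
  by (cases v; cases w) (auto simp: rv_def)

definition ext3 :: "(int \<times> int \<times> int \<Rightarrow> int \<times> int \<times> int) \<Rightarrow> real \<times> real \<times> real \<Rightarrow> real \<times> real \<times> real" where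
  "ext3 g w = fst w *\<^sub>R rv (g (1,0,0)) + fst (snd w) *\<^sub>R rv (g (0,1,0)) + snd (snd w) *\<^sub>R rv (g (0,0,1))"

lemma ext3_linear: "linear (ext3 g)"
  by (rule linearI) (auto simp: ext3_def algebra_simps)

lemma lin3:
  fixes g :: "int \<times> int \<times> int \<Rightarrow> int \<times> int \<times> int"
  assumes add: "\<And>x y. g (x + y) = g x + g y"
  shows "g (a,b,c) = zmul a (g (1,0,0)) + zmul b (g (0,1,0)) + zmul c (g (0,0,1))"
proof -
  have "(a,b,c) = zmul a (1,0,0) + zmul b (0,1,0) + zmul c (0,0,1)"
    by (simp add: zmul_int3)
  then have "g (a,b,c) = g (zmul a (1,0,0) + zmul b (0,1,0) + zmul c (0,0,1))" by simp
  also have "\<dots> = zmul a (g (1,0,0)) + zmul b (g (0,1,0)) + zmul c (g (0,0,1))"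
    by (simp add: add zmul_hom[OF add])
  finally show ?thesis .
qed

lemma ext3_rv:
  fixes g :: "int \<times> int \<times> int \<Rightarrow> int \<times> int \<times> int"
  assumes add: "\<And>x y. g (x + y) = g x + g y"
  shows "ext3 g (rv v) = rv (g v)"
proof -
  obtain a b c where v: "v = (a,b,c)" by (cases v) auto
  obtain p1 p2 p3 where 1: "g (1,0,0) = (p1,p2,p3)" by (cases "g (1,0,0)") auto
  obtain r1 r2 r3 where 2: "g (0,1,0) = (r1,r2,r3)" by (cases "g (0,1,0)") auto
  obtain t1 t2 t3 where 3: "g (0,0,1) = (t1,t2,t3)" by (cases "g (0,0,1)") auto
  have gv: "g v = zmul a (g (1,0,0)) + zmul b (g (0,1,0)) + zmul c (g (0,0,1))"
    using lin3[OF add, of a b c] v by simp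
  show ?thesis
    unfolding gv unfolding 1 2 3 v by (simp add: ext3_def rv_def zmul_int3 1 2 3)
qed

lemma left_inv_right:
  fixes A L :: "int \<times> int \<times> int \<Rightarrow> int \<times> int \<times> int"
  assumes addA: "\<And>x y. A (x + y) = A x + A y"
    and addL: "\<And>x y. L (x + y) = L x + L y"
    and inv: "\<And>v. L (A v) = v"
  shows "A (L v) = v"
proof -
  have linA: "linear (ext3 A)" and linL: "linear (ext3 L)" by (rule ext3_linear)+
  have LA: "ext3 L (ext3 A w) = w" for w
  proof -
    obtain x y z where w: "w = (x,y,z)" by (cases w) auto
    have "w = x *\<^sub>R rv (1,0,0) + y *\<^sub>R rv (0,1,0) + z *\<^sub>R rv (0,0,1)"
      by (simp add: w rv_def)
    then have "ext3 L (ext3 A w) = x *\<^sub>R ext3 L (ext3 A (rv (1,0,0))) + y *\<^sub>R ext3 L (ext3 A (rv (0,1,0)))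
         + z *\<^sub>R ext3 L (ext3 A (rv (0,0,1)))"
      using linear_add[OF linA] linear_scale[OF linA] linear_add[OF linL] linear_scale[OF linL]
      by metis
    also have "\<dots> = x *\<^sub>R rv (1,0,0) + y *\<^sub>R rv (0,1,0) + z *\<^sub>R rv (0,0,1)"
      by (simp only: ext3_rv addA addL inv)
    also have "\<dots> = w" by (simp add: w rv_def)
    finally show ?thesis .
  qed
  have "inj (ext3 A)" by (metis LA injI)
  then have "surj (ext3 A)" using linear_injective_imp_surjective[OF linA] by simp
  then have AL: "ext3 A (ext3 L w) = w" for w by (metis LA surjD)
  have "rv (A (L v)) = rv v"
    using AL[of "rv v"] by (simp add: ext3_rv addA addL)
  then show ?thesis by (rule rv_inj)
qed

lemma basis_crit:
  fixes x1 x2 x3 :: "'a::ab_group_add" and Phi :: "'a \<Rightarrow> int \<times> int \<times> int"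
    and N Ni :: "int \<times> int \<times> int \<Rightarrow> int \<times> int \<times> int"
  assumes iso: "iso_Z3 TYPE('a)"
    and addP: "\<And>x y. Phi (x + y) = Phi x + Phi y"
    and PN: "\<And>m n k. Phi (zmul m x1 + zmul n x2 + zmul k x3) = N (m,n,k)"
    and NiN: "\<And>v. Ni (N v) = v"
    and addNi: "\<And>v w. Ni (v + w) = Ni v + Ni w"
  shows "Zbasis3 x1 x2 x3"
proof -
  from iso obtain h :: "'a \<Rightarrow> int \<times> int \<times> int" where bh: "bij h"
    and addh: "\<And>x y. h (x + y) = h x + h y" unfolding iso_Z3_def by blast
  define E where "E = (\<lambda>(m::int, n::int, k::int). zmul m x1 + zmul n x2 + zmul k x3)"
  define A where "A v = h (E v)" for v
  obtain u11 u12 u13 where h1: "h x1 = (u11,u12,u13)" by (cases "h x1") auto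
  obtain u21 u22 u23 where h2: "h x2 = (u21,u22,u23)" by (cases "h x2") auto
  obtain u31 u32 u33 where h3: "h x3 = (u31,u32,u33)" by (cases "h x3") auto
  have Aform: "A (a,b,c) = (a*u11 + b*u21 + c*u31, a*u12 + b*u22 + c*u32, a*u13 + b*u23 + c*u33)" for a b c
    by (simp add: A_def E_def addh zmul_hom[OF addh] h1 h2 h3 zmul_int3)
  have addA: "A (v + w) = A v + A w" for v w
  proof -
    obtain a b c where v: "v = (a,b,c)" by (cases v) auto
    obtain a' b' c' where w: "w = (a',b',c')" by (cases w) auto
    show ?thesis by (simp add: v w Aform algebra_simps)
  qed
  have hinv: "h (inv h y) = y" for y using bh by (simp add: bij_is_surj surj_f_inv_f)
  have invh: "inv h (h z) = z" for z using bh by (simp add: bij_is_inj)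
  have addinv: "inv h (v + w) = inv h v + inv h w" for v w
  proof -
    have "inv h (v + w) = inv h (h (inv h v + inv h w))" by (simp add: addh hinv)
    then show ?thesis by (simp add: invh)
  qed
  define L where "L v = Ni (Phi (inv h v))" for v
  have addL: "L (v + w) = L v + L w" for v w by (simp add: L_def addinv addP addNi)
  have LA: "L (A v) = v" for v
  proof -
    obtain a b c where v: "v = (a,b,c)" by (cases v) auto
    show ?thesis by (simp add: L_def A_def invh v E_def PN NiN)
  qed
  have AL: "A (L v) = v" for v by (rule left_inv_right[OF addA addL LA])
  have bA: "bij A" by (metis AL LA bijI injI surjI)
  have EA: "E = inv h \<circ> A" by (rule ext) (simp add: A_def invh)
  have "bij E" unfolding EA by (rule bij_comp[OF bA bij_imp_bij_inv[OF bh]])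
  then show ?thesis unfolding Zbasis3_def E_def .
qed

lemma pair_zmul2:
  fixes pair :: "'k1::ab_group_add \<Rightarrow> 'k0::ab_group_add \<Rightarrow> int"
  assumes "\<forall>x y z. pair x (y + z) = pair x y + pair x z"
  shows "pair y (zmul m x) = m * pair y x"
proof -
  have "pair y (zmul m x) = zmul m (pair y x)" by (rule zmul_hom) (use assms in auto)
  then show ?thesis by (simp add: zmul_int)
qed

lemma pair_zmul1:
  fixes pair :: "'k1::ab_group_add \<Rightarrow> 'k0::ab_group_add \<Rightarrow> int"
  assumes "\<forall>x y z. pair (x + y) z = pair x z + pair y z"
  shows "pair (zmul m y) x = m * pair y x"
proof -
  have "(\<lambda>y. pair y x) (zmul m y) = zmul m (pair y x)" by (rule zmul_hom) (use assms in auto)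
  then show ?thesis by (simp add: zmul_int)
qed

theorem main_alg:
  fixes e :: "nat \<Rightarrow> 'k0::ab_group_add"
    and f :: "nat \<Rightarrow> 'k1::ab_group_add"
    and pair :: "'k1 \<Rightarrow> 'k0 \<Rightarrow> int"
  assumes "iso_Z3 TYPE('k0)" and "iso_Z3 TYPE('k1)"
    and a1: "\<forall>x y z. pair (x + y) z = pair x z + pair y z"
    and a2: "\<forall>x y z. pair x (y + z) = pair x y + pair x z"
    and v: "pair (f 1) (e 1) = 1" "pair (f 1) (e 2) = 1" "pair (f 1) (e 3) = 1"
      "pair (f 2) (e 1) = 0" "pair (f 2) (e 2) = -1" "pair (f 2) (e 3) = 1"
      "pair (f 3) (e 1) = 0" "pair (f 3) (e 2) = 0" "pair (f 3) (e 3) = 1"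
  shows "Zbasis3 (e 1) (e 2) (e 3) \<and> Zbasis3 (f 1) (f 2) (f 3)"
proof
  show "Zbasis3 (e 1) (e 2) (e 3)"
  proof (rule basis_crit[where Phi="\<lambda>x. (pair (f 1) x, pair (f 2) x, pair (f 3) x)"
      and N="\<lambda>(m::int,n::int,k::int). (m+n+k, -n+k, k)" and Ni="\<lambda>(a::int,b::int,c::int). (a+b-2*c, c-b, c)"])
    show "iso_Z3 TYPE('k0)" by fact
    show "\<And>x y. (pair (f 1) (x + y), pair (f 2) (x + y), pair (f 3) (x + y)) =
       (pair (f 1) x, pair (f 2) x, pair (f 3) x) + (pair (f 1) y, pair (f 2) y, pair (f 3) y)"
      using a2 by simp
    show "\<And>m n k. (pair (f 1) (zmul m (e 1) + zmul n (e 2) + zmul k (e 3)),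
        pair (f 2) (zmul m (e 1) + zmul n (e 2) + zmul k (e 3)),
        pair (f 3) (zmul m (e 1) + zmul n (e 2) + zmul k (e 3))) =
       (case (m, n, k) of (m, n, k) \<Rightarrow> (m + n + k, - n + k, k))"
      using a2 by (simp add: pair_zmul2[OF a2] v v[unfolded One_nat_def])
    show "\<And>v::int\<times>int\<times>int. (case case v of (m, n, k) \<Rightarrow> (m + n + k, - n + k, k) of (a, b, c) \<Rightarrow> (a + b - 2 * c, c - b, c)) = v"
      by auto
    show "\<And>v w::int\<times>int\<times>int. (case v + w of (a, b, c) \<Rightarrow> (a + b - 2 * c, c - b, c)) =
       (case v of (a, b, c) \<Rightarrow> (a + b - 2 * c, c - b, c)) + (case w of (a, b, c) \<Rightarrow> (a + b - 2 * c, c - b, c))"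
      by (auto simp: algebra_simps split: prod.splits)
  qed
  show "Zbasis3 (f 1) (f 2) (f 3)"
  proof (rule basis_crit[where Phi="\<lambda>y. (pair y (e 1), pair y (e 2), pair y (e 3))"
      and N="\<lambda>(m::int,n::int,k::int). (m, m-n, m+n+k)" and Ni="\<lambda>(a::int,b::int,c::int). (a, a-b, c-2*a+b)"])
    show "iso_Z3 TYPE('k1)" by fact
    show "\<And>x y. (pair (x + y) (e 1), pair (x + y) (e 2), pair (x + y) (e 3)) =
       (pair x (e 1), pair x (e 2), pair x (e 3)) + (pair y (e 1), pair y (e 2), pair y (e 3))"
      using a1 by simp
    show "\<And>m n k. (pair (zmul m (f 1) + zmul n (f 2) + zmul k (f 3)) (e 1),
        pair (zmul m (f 1) + zmul n (f 2) + zmul k (f 3)) (e 2),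
        pair (zmul m (f 1) + zmul n (f 2) + zmul k (f 3)) (e 3)) =
       (case (m, n, k) of (m, n, k) \<Rightarrow> (m, m - n, m + n + k))"
      using a1 by (simp add: pair_zmul1[OF a1] v v[unfolded One_nat_def])
    show "\<And>v::int\<times>int\<times>int. (case case v of (m, n, k) \<Rightarrow> (m, m - n, m + n + k) of (a, b, c) \<Rightarrow> (a, a - b, c - 2 * a + b)) = v"
      by auto
    show "\<And>v w::int\<times>int\<times>int. (case v + w of (a, b, c) \<Rightarrow> (a, a - b, c - 2 * a + b)) =
       (case v of (a, b, c) \<Rightarrow> (a, a - b, c - 2 * a + b)) + (case w of (a, b, c) \<Rightarrow> (a, a - b, c - 2 * a + b))"
      by (auto simp: algebra_simps split: prod.splits)
  qed
qed


theorem corollary4p2: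
  fixes q :: real
    and e :: "nat \<Rightarrow> 'k0::ab_group_add"
    and f :: "nat \<Rightarrow> 'k1::ab_group_add"
    and pair :: "'k1 \<Rightarrow> 'k0 \<Rightarrow> int"
  assumes "0 < q" and "q < 1"
    and "iso_Z3 TYPE('k0)" and "iso_Z3 TYPE('k1)"
    and "\<forall>x y z. pair (x + y) z = pair x z + pair y z"
    and "\<forall>x y z. pair x (y + z) = pair x y + pair x z"
    and "\<forall>j\<in>{1,2,3}. of_int (pair (f 1) (e j)) = index_pairing phi1_plus phi1_minus (proj q j)"
    and "\<forall>j\<in>{1,2,3}. of_int (pair (f 2) (e j)) = index_pairing (phi2_plus q) phi2_minus (proj q j)"
    and "\<forall>j\<in>{1,2,3}. of_int (pair (f 3) (e j)) = index_pairing (phi3_plus q) (phi3_minus q) (proj q j)"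
  shows "Zbasis3 (e 1) (e 2) (e 3) \<and> Zbasis3 (f 1) (f 2) (f 3)"
proof -
  note q = assms(1,2)
  have P1: "\<And>j. j \<in> {1,2,3} \<Longrightarrow> complex_of_int (pair (f 1) (e j)) = index_pairing phi1_plus phi1_minus (proj q j)"
    using assms(7) by blast
  have P2: "\<And>j. j \<in> {1,2,3} \<Longrightarrow> complex_of_int (pair (f 2) (e j)) = index_pairing (phi2_plus q) phi2_minus (proj q j)"
    using assms(8) by blast
  have P3: "\<And>j. j \<in> {1,2,3} \<Longrightarrow> complex_of_int (pair (f 3) (e j)) = index_pairing (phi3_plus q) (phi3_minus q) (proj q j)"
    using assms(9) by blast
  have v11: "pair (f 1) (e 1) = 1" using P1[of 1] pair11[OF q] by simp
  have v12: "pair (f 1) (e 2) = 1" using P1[of 2] pair12[OF q] by simp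
  have v13: "pair (f 1) (e 3) = 1" using P1[of 3] pair13[OF q] by simp
  have v21: "pair (f 2) (e 1) = 0" using P2[of 1] pair21[OF q] by simp
  have v22: "pair (f 2) (e 2) = -1"
  proof -
    have "complex_of_int (pair (f 2) (e 2)) = complex_of_int (-1)" using P2[of 2] pair22[OF q] by simp
    then show ?thesis by (simp only: of_int_eq_iff)
  qed
  have v23: "pair (f 2) (e 3) = 1" using P2[of 3] pair23[OF q] by simp
  have v31: "pair (f 3) (e 1) = 0" using P3[of 1] pair31[OF q] by simp
  have v32: "pair (f 3) (e 2) = 0" using P3[of 2] pair32[OF q] by simp
  have v33: "pair (f 3) (e 3) = 1" using P3[of 3] pair33[OF q] by simp
  show ?thesis
    by (rule main_alg[OF assms(3,4,5,6) v11 v12 v13 v21 v22 v23 v31 v32 v33])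
qed

end
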